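(* The functor $H\colon\mathrm{SPP}\to\mathrm{EEED}$ is well defined and gives an equivalence from $\mathrm{SPP}$ to the full subcategory $\{M\in\mathrm{EEED}:\eta=0\}$ of exact extended $\eta$-diagrams whose map $\eta$ is zero.
   Context: For an abelian group $U$, $U[2]=\{u:2u=0\}$, $U/2=U/2U$, and $\bar c=c+2C$. An extended $\eta$-diagram is a diagram of abelian groups $B\xrightarrow{\psi}A\xrightarrow{\eta}C\xrightarrow{\chi}B$ with $2\eta=0$, $\psi\chi=0$, $\chi\eta\psi=2\cdot1_B$; morphisms are triples $(f\colon A\to A',g\colon B\to B',h\colon C\to C')$ commuting with $\psi,\eta,\chi$. It is exact if the induced sequence $C/2\xrightarrow{\chi}B\xrightarrow{\psi}A[2]$ is short exact; $\mathrm{EEED}$ is the category of these. The category $\mathrm{SPP}$ has objects pairs $(A,C)$ of abelian groups; morphisms $(A_0,C_0)\to(A_1,C_1)$ are triples $(f,h,u)$ with $f\colon A_0\to A_1$, $h\colon C_0\to C_1$, $u\colon A_0[2]\to C_1/2$; identities are $(1,1,0)$ and the composite of $(f_0,h_0,u_0)$ followed by $(f_1,h_1,u_1)$ is $(f_1f_0,h_1h_0,h_1\circ u_0+u_1\circ f_0)$. The functor $H$ sends $(A,C)$ to the diagram $C/2\oplus A[2]\xrightarrow{\psi}A\xrightarrow{0}C\xrightarrow{\chi}C/2\oplus A[2]$ with $\psi(\bar c,a)=a$ and $\chi(c)=(\bar c,0)$, and sends $(f,h,u)$ to the morphism $(f,g,h)$ where $g(\bar c_0,a_0)=(\overline{h(c_0)}+u(a_0),f(a_0))$.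 *)

theory Defs
  imports "HOL-Algebra.Algebra"
begin

text \<open>Abelian groups are rendered as HOL-Algebra commutative groups (written multiplicatively:
  the group law is \<open>\<otimes>\<close>, zero is \<open>\<one>\<close>, and \<open>2u\<close> is \<open>u \<otimes> u\<close>).  Homomorphisms are
  HOL-Algebra homomorphisms; equality of homomorphisms means equality on the carrier.\<close>

definition two_tors :: "('a,'m) monoid_scheme \<Rightarrow> 'a set" where
  "two_tors G = {x \<in> carrier G. x \<otimes>\<^bsub>G\<^esub> x = \<one>\<^bsub>G\<^esub>}"

definition tors2 :: "('a,'m) monoid_scheme \<Rightarrow> 'a monoid" where
  "tors2 G = \<lparr>carrier = two_tors G, monoid.mult = monoid.mult G, one = \<one>\<^bsub>G\<^esub>\<rparr>"

definition twice :: "('a,'m) monoid_scheme \<Rightarrow> 'a set" where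
  "twice G = {x \<otimes>\<^bsub>G\<^esub> x | x. x \<in> carrier G}"

definition mod2 :: "('a,'m) monoid_scheme \<Rightarrow> 'a set monoid" where
  "mod2 G = G Mod twice G"

definition cls :: "('a,'m) monoid_scheme \<Rightarrow> 'a \<Rightarrow> 'a set" where
  "cls G c = twice G #>\<^bsub>G\<^esub> c"

definition mod2_map :: "('c,'m) monoid_scheme \<Rightarrow> ('d,'n) monoid_scheme \<Rightarrow> ('c \<Rightarrow> 'd) \<Rightarrow> 'c set \<Rightarrow> 'd set" where
  "mod2_map C D h Y = twice D <#>\<^bsub>D\<^esub> (h ` Y)"

record ('a,'b,'c) eed =
  dA :: "'a monoid"
  dB :: "'b monoid"
  dC :: "'c monoid"
  psi :: "'b \<Rightarrow> 'a"
  eta :: "'a \<Rightarrow> 'c"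
  chi :: "'c \<Rightarrow> 'b"

definition ext_eta_diagram :: "('a,'b,'c,'z) eed_scheme \<Rightarrow> bool" where
  "ext_eta_diagram D \<longleftrightarrow>
     comm_group (dA D) \<and> comm_group (dB D) \<and> comm_group (dC D) \<and>
     psi D \<in> hom (dB D) (dA D) \<and> eta D \<in> hom (dA D) (dC D) \<and> chi D \<in> hom (dC D) (dB D) \<and>
     (\<forall>a \<in> carrier (dA D). eta D a \<otimes>\<^bsub>dC D\<^esub> eta D a = \<one>\<^bsub>dC D\<^esub>) \<and>
     (\<forall>c \<in> carrier (dC D). psi D (chi D c) = \<one>\<^bsub>dA D\<^esub>) \<and>
     (\<forall>b \<in> carrier (dB D). chi D (eta D (psi D b)) = b \<otimes>\<^bsub>dB D\<^esub> b)"

text \<open>Exactness: the induced sequence \<open>C/2 \<rightarrow> B \<rightarrow> A[2]\<close> (\<open>\<bar>c \<mapsto> \<chi> c\<close>, \<open>b \<mapsto> \<psi> b\<close>; these maps are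
  well defined for every extended eta-diagram) is short exact: the induced map on \<open>C/2\<close> is
  injective, its image is the kernel of \<open>\<psi>\<close>, and \<open>\<psi>\<close> maps \<open>B\<close> onto \<open>A[2]\<close>.\<close>
definition exact_eed :: "('a,'b,'c,'z) eed_scheme \<Rightarrow> bool" where
  "exact_eed D \<longleftrightarrow> ext_eta_diagram D \<and>
     (\<forall>c \<in> carrier (dC D). chi D c = \<one>\<^bsub>dB D\<^esub> \<longrightarrow> c \<in> twice (dC D)) \<and>
     chi D ` carrier (dC D) = {b \<in> carrier (dB D). psi D b = \<one>\<^bsub>dA D\<^esub>} \<and>
     psi D ` carrier (dB D) = two_tors (dA D)"

definition eed_mor ::
  "('a,'b,'c,'z) eed_scheme \<Rightarrow> ('a1,'b1,'c1,'z1) eed_scheme \<Rightarrow>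
     ('a \<Rightarrow> 'a1) \<times> ('b \<Rightarrow> 'b1) \<times> ('c \<Rightarrow> 'c1) \<Rightarrow> bool" where
  "eed_mor D D' m \<longleftrightarrow> (case m of (f, g, h) \<Rightarrow>
     f \<in> hom (dA D) (dA D') \<and> g \<in> hom (dB D) (dB D') \<and> h \<in> hom (dC D) (dC D') \<and>
     (\<forall>b \<in> carrier (dB D). f (psi D b) = psi D' (g b)) \<and>
     (\<forall>a \<in> carrier (dA D). h (eta D a) = eta D' (f a)) \<and>
     (\<forall>c \<in> carrier (dC D). g (chi D c) = chi D' (h c)))"

definition eed_mor_eq ::
  "('a,'b,'c,'z) eed_scheme \<Rightarrow> ('a \<Rightarrow> 'a1) \<times> ('b \<Rightarrow> 'b1) \<times> ('c \<Rightarrow> 'c1) \<Rightarrow>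
     ('a \<Rightarrow> 'a1) \<times> ('b \<Rightarrow> 'b1) \<times> ('c \<Rightarrow> 'c1) \<Rightarrow> bool" where
  "eed_mor_eq D m m' \<longleftrightarrow> (case m of (f, g, h) \<Rightarrow> case m' of (f', g', h') \<Rightarrow>
     (\<forall>a \<in> carrier (dA D). f a = f' a) \<and> (\<forall>b \<in> carrier (dB D). g b = g' b) \<and>
     (\<forall>c \<in> carrier (dC D). h c = h' c))"

definition eed_id :: "('a \<Rightarrow> 'a) \<times> ('b \<Rightarrow> 'b) \<times> ('c \<Rightarrow> 'c)" where
  "eed_id = (id, id, id)"

definition eed_comp ::
  "('a \<Rightarrow> 'a1) \<times> ('b \<Rightarrow> 'b1) \<times> ('c \<Rightarrow> 'c1) \<Rightarrow> ('a1 \<Rightarrow> 'a2) \<times> ('b1 \<Rightarrow> 'b2) \<times> ('c1 \<Rightarrow> 'c2) \<Rightarrow>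
     ('a \<Rightarrow> 'a2) \<times> ('b \<Rightarrow> 'b2) \<times> ('c \<Rightarrow> 'c2)" where
  "eed_comp m m' = (case m of (f, g, h) \<Rightarrow> case m' of (f', g', h') \<Rightarrow> (f' \<circ> f, g' \<circ> g, h' \<circ> h))"

definition spp_obj :: "('a,'m) monoid_scheme \<Rightarrow> ('c,'n) monoid_scheme \<Rightarrow> bool" where
  "spp_obj A C \<longleftrightarrow> comm_group A \<and> comm_group C"

definition spp_mor ::
  "'a monoid \<Rightarrow> 'c monoid \<Rightarrow> 'a1 monoid \<Rightarrow> 'c1 monoid \<Rightarrow>
     ('a \<Rightarrow> 'a1) \<times> ('c \<Rightarrow> 'c1) \<times> ('a \<Rightarrow> 'c1 set) \<Rightarrow> bool" where
  "spp_mor A0 C0 A1 C1 m \<longleftrightarrow> (case m of (f, h, u) \<Rightarrow>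
     f \<in> hom A0 A1 \<and> h \<in> hom C0 C1 \<and> u \<in> hom (tors2 A0) (mod2 C1))"

definition spp_mor_eq ::
  "'a monoid \<Rightarrow> 'c monoid \<Rightarrow>
     ('a \<Rightarrow> 'a1) \<times> ('c \<Rightarrow> 'c1) \<times> ('a \<Rightarrow> 'c1 set) \<Rightarrow>
     ('a \<Rightarrow> 'a1) \<times> ('c \<Rightarrow> 'c1) \<times> ('a \<Rightarrow> 'c1 set) \<Rightarrow> bool" where
  "spp_mor_eq A0 C0 m m' \<longleftrightarrow> (case m of (f, h, u) \<Rightarrow> case m' of (f', h', u') \<Rightarrow>
     (\<forall>a \<in> carrier A0. f a = f' a) \<and> (\<forall>c \<in> carrier C0. h c = h' c) \<and>
     (\<forall>a \<in> two_tors A0. u a = u' a))"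

definition spp_id :: "'a monoid \<Rightarrow> 'c monoid \<Rightarrow> ('a \<Rightarrow> 'a) \<times> ('c \<Rightarrow> 'c) \<times> ('a \<Rightarrow> 'c set)" where
  "spp_id A C = (id, id, \<lambda>a. \<one>\<^bsub>mod2 C\<^esub>)"

definition spp_comp ::
  "'c1 monoid \<Rightarrow> 'c2 monoid \<Rightarrow>
     ('a \<Rightarrow> 'a1) \<times> ('c \<Rightarrow> 'c1) \<times> ('a \<Rightarrow> 'c1 set) \<Rightarrow>
     ('a1 \<Rightarrow> 'a2) \<times> ('c1 \<Rightarrow> 'c2) \<times> ('a1 \<Rightarrow> 'c2 set) \<Rightarrow>
     ('a \<Rightarrow> 'a2) \<times> ('c \<Rightarrow> 'c2) \<times> ('a \<Rightarrow> 'c2 set)" where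
  "spp_comp C1 C2 m0 m1 = (case m0 of (f0, h0, u0) \<Rightarrow> case m1 of (f1, h1, u1) \<Rightarrow>
     (f1 \<circ> f0, h1 \<circ> h0,
      \<lambda>a. mod2_map C1 C2 h1 (u0 a) \<otimes>\<^bsub>mod2 C2\<^esub> u1 (f0 a)))"

definition H_obj :: "'a monoid \<Rightarrow> 'c monoid \<Rightarrow> ('a, 'c set \<times> 'a, 'c) eed" where
  "H_obj A C = \<lparr> dA = A, dB = mod2 C \<times>\<times> tors2 A, dC = C,
      psi = (\<lambda>(x, a). a), eta = (\<lambda>a. \<one>\<^bsub>C\<^esub>), chi = (\<lambda>c. (cls C c, \<one>\<^bsub>A\<^esub>)) \<rparr>"

definition H_mor ::
  "'c monoid \<Rightarrow> 'c1 monoid \<Rightarrow> ('a \<Rightarrow> 'a1) \<times> ('c \<Rightarrow> 'c1) \<times> ('a \<Rightarrow> 'c1 set) \<Rightarrow>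
     ('a \<Rightarrow> 'a1) \<times> ('c set \<times> 'a \<Rightarrow> 'c1 set \<times> 'a1) \<times> ('c \<Rightarrow> 'c1)" where
  "H_mor C0 C1 m = (case m of (f, h, u) \<Rightarrow>
     (f, \<lambda>(x, a). (mod2_map C0 C1 h x \<otimes>\<^bsub>mod2 C1\<^esub> u a, f a), h))"

end

theory Submission
  imports Defs
begin

context comm_group begin

lemma twice_subgroup: "subgroup (twice G) G"
proof
  show "twice G \<subseteq> carrier G" by (auto simp: twice_def)
  show "\<one> \<in> twice G" unfolding twice_def by (rule CollectI, rule exI[of _ \<one>]) auto
  fix x y assume "x \<in> twice G" "y \<in> twice G"
  then obtain a b where ab: "a \<in> carrier G" "b \<in> carrier G" "x = a \<otimes> a" "y = b \<otimes> b" by (auto simp: twice_def)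
  have "x \<otimes> y = (a \<otimes> b) \<otimes> (a \<otimes> b)" using ab by (simp add: m_ac)
  then show "x \<otimes> y \<in> twice G" using ab unfolding twice_def by blast
next
  fix x assume "x \<in> twice G"
  then obtain a where ab: "a \<in> carrier G" "x = a \<otimes> a" by (auto simp: twice_def)
  have "inv x = inv a \<otimes> inv a" using ab by (simp add: inv_mult)
  then show "inv x \<in> twice G" using ab unfolding twice_def by blast
qed

lemma mod2_comm_group: "comm_group (mod2 G)"
  unfolding mod2_def by (simp add: abelian_FactGroup twice_subgroup)

lemma cls_hom: "cls G \<in> hom G (mod2 G)"
proof -
  have "twice G \<lhd> G" by (simp add: subgroup_imp_normal twice_subgroup)
  then show ?thesis unfolding mod2_def cls_def[abs_def] by (rule normal.r_coset_hom_Mod)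
qed

lemma cls_carrier: "c \<in> carrier G \<Longrightarrow> cls G c \<in> carrier (mod2 G)"
  using cls_hom by (blast intro: hom_in_carrier)

lemma cls_mult: "c \<in> carrier G \<Longrightarrow> d \<in> carrier G \<Longrightarrow> cls G (c \<otimes> d) = cls G c \<otimes>\<^bsub>mod2 G\<^esub> cls G d"
  by (rule Group.hom_mult[OF cls_hom])

lemma cls_eq_one: assumes "c \<in> carrier G"
  shows "cls G c = twice G \<longleftrightarrow> c \<in> twice G"
proof
  assume "cls G c = twice G"
  moreover have "c \<in> twice G #> c" using rcos_self[OF assms twice_subgroup] .
  ultimately show "c \<in> twice G" by (simp add: cls_def)
next
  assume "c \<in> twice G" then show "cls G c = twice G" unfolding cls_def
    by (simp add: subgroup.rcos_const[OF twice_subgroup is_group])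
qed

lemma cls_sq: "c \<in> carrier G \<Longrightarrow> cls G (c \<otimes> c) = twice G"
  by (subst cls_eq_one) (auto simp: twice_def)

lemma cls_eq_iff: assumes "c \<in> carrier G" "d \<in> carrier G"
  shows "cls G c = cls G d \<longleftrightarrow> c \<otimes> inv d \<in> twice G"
proof -
  have "cls G c = cls G d \<longleftrightarrow> c \<in> twice G #> d"
    unfolding cls_def using assms repr_independence[OF _ assms(2) twice_subgroup] 
      repr_independenceD[OF twice_subgroup assms(1)] by metis
  also have "\<dots> \<longleftrightarrow> c \<otimes> inv d \<in> twice G"
    by (rule subgroup.rcos_module[OF twice_subgroup is_group assms(2,1)])
  finally show ?thesis .
qed

lemma twice_sq: "x \<in> carrier G \<Longrightarrow> x \<otimes> x \<in> twice G"
  by (auto simp: twice_def)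

end

lemma mod2_map_cls:
  assumes C: "comm_group C" and D: "comm_group D" and h: "h \<in> hom C D" and c: "c \<in> carrier C"
  shows "mod2_map C D h (cls C c) = cls D (h c)"
proof -
  interpret C: comm_group C by fact
  interpret D: comm_group D by fact
  have hm: "\<And>x y. x \<in> carrier C \<Longrightarrow> y \<in> carrier C \<Longrightarrow> h (x \<otimes>\<^bsub>C\<^esub> y) = h x \<otimes>\<^bsub>D\<^esub> h y"
    using h by (simp add: Group.hom_mult)
  have hc: "\<And>x. x \<in> carrier C \<Longrightarrow> h x \<in> carrier D" using h by (simp add: hom_in_carrier)
  show ?thesis
  proof (rule Set.set_eqI)
    fix w
    show "w \<in> mod2_map C D h (cls C c) \<longleftrightarrow> w \<in> cls D (h c)"
    proof
      assume "w \<in> mod2_map C D h (cls C c)"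
      then obtain y z where yz: "y \<in> twice D" "z \<in> h ` (twice C #>\<^bsub>C\<^esub> c)" "w = y \<otimes>\<^bsub>D\<^esub> z"
        unfolding mod2_map_def cls_def set_mult_def by blast
      obtain d where d: "d \<in> carrier D" "y = d \<otimes>\<^bsub>D\<^esub> d" using yz(1) unfolding twice_def by blast
      obtain x where x: "x \<in> twice C" "z = h (x \<otimes>\<^bsub>C\<^esub> c)" using yz(2) unfolding r_coset_def by blast
      obtain t where t: "t \<in> carrier C" "x = t \<otimes>\<^bsub>C\<^esub> t" using x(1) unfolding twice_def by blast
      have "w = (d \<otimes>\<^bsub>D\<^esub> d) \<otimes>\<^bsub>D\<^esub> ((h t \<otimes>\<^bsub>D\<^esub> h t) \<otimes>\<^bsub>D\<^esub> h c)"
        using yz(3) d x t c by (simp add: hm)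
      also have "\<dots> = ((d \<otimes>\<^bsub>D\<^esub> h t) \<otimes>\<^bsub>D\<^esub> (d \<otimes>\<^bsub>D\<^esub> h t)) \<otimes>\<^bsub>D\<^esub> h c"
        using d t c hc by (simp add: D.m_ac)
      finally have w: "w = ((d \<otimes>\<^bsub>D\<^esub> h t) \<otimes>\<^bsub>D\<^esub> (d \<otimes>\<^bsub>D\<^esub> h t)) \<otimes>\<^bsub>D\<^esub> h c" .
      have "(d \<otimes>\<^bsub>D\<^esub> h t) \<otimes>\<^bsub>D\<^esub> (d \<otimes>\<^bsub>D\<^esub> h t) \<in> twice D"
        using d t hc unfolding twice_def by blast
      then show "w \<in> cls D (h c)" unfolding cls_def r_coset_def w by blast
    next
      assume "w \<in> cls D (h c)"
      then obtain y where y: "y \<in> twice D" "w = y \<otimes>\<^bsub>D\<^esub> h c"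
        unfolding cls_def r_coset_def by blast
      have "\<one>\<^bsub>C\<^esub> \<in> twice C" using C.twice_subgroup subgroup.one_closed by blast
      then have "c \<in> twice C #>\<^bsub>C\<^esub> c" using c unfolding r_coset_def by force
      then have "h c \<in> h ` (twice C #>\<^bsub>C\<^esub> c)" by blast
      then show "w \<in> mod2_map C D h (cls C c)" using y
        unfolding mod2_map_def cls_def set_mult_def by blast
    qed
  qed
qed

lemma carrier_mod2: "carrier (mod2 G) = rcosets\<^bsub>G\<^esub> (twice G)"
  by (simp add: mod2_def FactGroup_def)
lemma one_mod2: "\<one>\<^bsub>mod2 G\<^esub> = twice G"
  by (simp add: mod2_def FactGroup_def)
lemma mult_mod2: "x \<otimes>\<^bsub>mod2 G\<^esub> y = x <#>\<^bsub>G\<^esub> y"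
  by (simp add: mod2_def FactGroup_def)
lemma mod2_surj: "x \<in> carrier (mod2 G) \<Longrightarrow> \<exists>c\<in>carrier G. x = cls G c"
  by (auto simp: carrier_mod2 cls_def RCOSETS_def)

lemma carrier_tors2 [simp]: "carrier (tors2 G) = two_tors G"
  by (simp add: tors2_def)
lemma one_tors2 [simp]: "\<one>\<^bsub>tors2 G\<^esub> = \<one>\<^bsub>G\<^esub>"
  by (simp add: tors2_def)
lemma mult_tors2 [simp]: "x \<otimes>\<^bsub>tors2 G\<^esub> y = x \<otimes>\<^bsub>G\<^esub> y"
  by (simp add: tors2_def)

context comm_group begin

lemma two_tors_mult: "x \<in> two_tors G \<Longrightarrow> y \<in> two_tors G \<Longrightarrow> x \<otimes> y \<in> two_tors G"
  unfolding two_tors_def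
proof (clarsimp)
  assume "x \<in> carrier G" "x \<otimes> x = \<one>" "y \<in> carrier G" "y \<otimes> y = \<one>"
  then have "x \<otimes> y \<otimes> (x \<otimes> y) = (x \<otimes> x) \<otimes> (y \<otimes> y)" by (simp add: m_ac)
  then show "x \<otimes> y \<otimes> (x \<otimes> y) = \<one>" using \<open>x \<otimes> x = \<one>\<close> \<open>y \<otimes> y = \<one>\<close> by simp
qed

lemma tors2_comm_group: "comm_group (tors2 G)"
proof (rule comm_groupI)
  fix x y z assume x: "x \<in> carrier (tors2 G)" and y: "y \<in> carrier (tors2 G)" and z: "z \<in> carrier (tors2 G)"
  have xc: "x \<in> carrier G" "y \<in> carrier G" "z \<in> carrier G" using x y z by (auto simp: two_tors_def)
  show "x \<otimes>\<^bsub>tors2 G\<^esub> y \<in> carrier (tors2 G)" using x y two_tors_mult by simp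
  show "x \<otimes>\<^bsub>tors2 G\<^esub> y \<otimes>\<^bsub>tors2 G\<^esub> z = x \<otimes>\<^bsub>tors2 G\<^esub> (y \<otimes>\<^bsub>tors2 G\<^esub> z)"
    using xc by (simp add: m_assoc)
next
  show "\<one>\<^bsub>tors2 G\<^esub> \<in> carrier (tors2 G)" by (simp add: two_tors_def)
next
  fix x y assume x: "x \<in> carrier (tors2 G)" and y: "y \<in> carrier (tors2 G)"
  then show "x \<otimes>\<^bsub>tors2 G\<^esub> y = y \<otimes>\<^bsub>tors2 G\<^esub> x" by (simp add: two_tors_def m_comm)
next
  fix x assume x: "x \<in> carrier (tors2 G)"
  then show "\<one>\<^bsub>tors2 G\<^esub> \<otimes>\<^bsub>tors2 G\<^esub> x = x" by (simp add: two_tors_def)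
  show "\<exists>y\<in>carrier (tors2 G). y \<otimes>\<^bsub>tors2 G\<^esub> x = \<one>\<^bsub>tors2 G\<^esub>" using x
    by (intro bexI[of _ x]) (auto simp: two_tors_def)
qed

lemma mod2_sq: assumes "x \<in> carrier (mod2 G)" shows "x \<otimes>\<^bsub>mod2 G\<^esub> x = \<one>\<^bsub>mod2 G\<^esub>"
proof -
  obtain c where c: "c \<in> carrier G" "x = cls G c" using assms mod2_surj by blast
  then show ?thesis by (simp add: cls_mult[symmetric] cls_sq one_mod2)
qed

lemma mod2_one_cls: "\<one>\<^bsub>mod2 G\<^esub> = cls G \<one>"
  using cls_eq_one[of \<one>] subgroup.one_closed[OF twice_subgroup] by (simp add: one_mod2)

end

lemma DirProd_comm_group: assumes "comm_group G" "comm_group H" shows "comm_group (G \<times>\<times> H)"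
proof -
  interpret G: comm_group G by fact
  interpret H: comm_group H by fact
  show ?thesis
    by (rule group.group_comm_groupI[OF DirProd_group[OF G.is_group H.is_group]])
       (auto simp: G.m_comm H.m_comm)
qed

lemma mod2_map_hom:
  assumes C: "comm_group C" and D: "comm_group D" and h: "h \<in> hom C D"
  shows "mod2_map C D h \<in> hom (mod2 C) (mod2 D)"
proof (rule homI)
  interpret C: comm_group C by fact
  interpret D: comm_group D by fact
  have hc: "\<And>x. x \<in> carrier C \<Longrightarrow> h x \<in> carrier D" using h by (simp add: hom_in_carrier)
  fix x assume "x \<in> carrier (mod2 C)"
  then obtain c where c: "c \<in> carrier C" "x = cls C c" using mod2_surj by blast
  then show "mod2_map C D h x \<in> carrier (mod2 D)"
    using mod2_map_cls[OF C D h] D.cls_carrier hc by simp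
  fix y assume "y \<in> carrier (mod2 C)"
  then obtain d where d: "d \<in> carrier C" "y = cls C d" using mod2_surj by blast
  show "mod2_map C D h (x \<otimes>\<^bsub>mod2 C\<^esub> y) = mod2_map C D h x \<otimes>\<^bsub>mod2 D\<^esub> mod2_map C D h y"
    using c d mod2_map_cls[OF C D h] hc
    by (simp add: C.cls_mult[symmetric] D.cls_mult[symmetric] Group.hom_mult[OF h])
qed

lemma mod2_map_comp:
  assumes C0: "comm_group C0" and C1: "comm_group C1" and C2: "comm_group C2"
    and h0: "h0 \<in> hom C0 C1" and h1: "h1 \<in> hom C1 C2" and x: "x \<in> carrier (mod2 C0)"
  shows "mod2_map C1 C2 h1 (mod2_map C0 C1 h0 x) = mod2_map C0 C2 (h1 \<circ> h0) x"
proof -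
  obtain c where c: "c \<in> carrier C0" "x = cls C0 c" using x mod2_surj by blast
  have h01: "h1 \<circ> h0 \<in> hom C0 C2" using h0 h1 by (rule hom_compose)
  show ?thesis using c mod2_map_cls[OF C0 C1 h0] mod2_map_cls[OF C1 C2 h1] mod2_map_cls[OF C0 C2 h01]
    hom_in_carrier[OF h0] by simp
qed

lemma mod2_map_id:
  assumes C: "comm_group C" and x: "x \<in> carrier (mod2 C)"
  shows "mod2_map C C id x = x"
proof -
  obtain c where c: "c \<in> carrier C" "x = cls C c" using x mod2_surj by blast
  have "id \<in> hom C C" by (simp add: hom_def)
  then show ?thesis using c mod2_map_cls[OF C C] by simp
qed


lemma H_obj_simps [simp]:
  "dA (H_obj A C) = A" "dB (H_obj A C) = mod2 C \<times>\<times> tors2 A" "dC (H_obj A C) = C"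
  "psi (H_obj A C) = (\<lambda>(x, a). a)" "eta (H_obj A C) = (\<lambda>a. \<one>\<^bsub>C\<^esub>)"
  "chi (H_obj A C) = (\<lambda>c. (cls C c, \<one>\<^bsub>A\<^esub>))"
  by (simp_all add: H_obj_def)

lemma H_obj_exact:
  fixes A :: "'a monoid" and C :: "'c monoid"
  assumes "spp_obj A C" shows "exact_eed (H_obj A C)"
proof -
  interpret A: comm_group A using assms by (simp add: spp_obj_def)
  interpret C: comm_group C using assms by (simp add: spp_obj_def)
  have tA: "two_tors A \<subseteq> carrier A" by (auto simp: two_tors_def)
  have B: "comm_group (mod2 C \<times>\<times> tors2 A)"
    by (rule DirProd_comm_group[OF C.mod2_comm_group A.tors2_comm_group])
  have psi: "(\<lambda>(x, a). a) \<in> hom (mod2 C \<times>\<times> tors2 A) A"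
    using tA by (auto simp: hom_def)
  have eta: "(\<lambda>a. \<one>\<^bsub>C\<^esub>) \<in> hom A C" by (auto simp: hom_def)
  have one_t: "(\<lambda>c. \<one>\<^bsub>A\<^esub>) \<in> hom C (tors2 A)" by (auto simp: hom_def two_tors_def)
  have chi: "(\<lambda>c. (cls C c, \<one>\<^bsub>A\<^esub>)) \<in> hom C (mod2 C \<times>\<times> tors2 A)"
    using C.cls_hom one_t by (simp add: hom_paired)
  have sq: "\<forall>b\<in>carrier (mod2 C \<times>\<times> tors2 A). (cls C \<one>\<^bsub>C\<^esub>, \<one>\<^bsub>A\<^esub>) = b \<otimes>\<^bsub>mod2 C \<times>\<times> tors2 A\<^esub> b"
  proof
    fix b assume b: "b \<in> carrier (mod2 C \<times>\<times> tors2 A)"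
    obtain x a where xa: "b = (x, a)" by (cases b)
    have "x \<otimes>\<^bsub>mod2 C\<^esub> x = cls C \<one>\<^bsub>C\<^esub>" using b xa C.mod2_sq C.mod2_one_cls by simp
    moreover have "a \<otimes>\<^bsub>A\<^esub> a = \<one>\<^bsub>A\<^esub>" using b xa by (simp add: two_tors_def)
    ultimately show "(cls C \<one>\<^bsub>C\<^esub>, \<one>\<^bsub>A\<^esub>) = b \<otimes>\<^bsub>mod2 C \<times>\<times> tors2 A\<^esub> b"
      using xa by simp
  qed
  have ext: "ext_eta_diagram (H_obj A C)"
    unfolding ext_eta_diagram_def H_obj_simps
    using A.comm_group_axioms B C.comm_group_axioms psi eta chi sq by simp
  show ?thesis unfolding exact_eed_def
  proof (intro conjI ext)
    show "\<forall>c\<in>carrier (dC (H_obj A C)). chi (H_obj A C) c = \<one>\<^bsub>dB (H_obj A C)\<^esub> \<longrightarrow> c \<in> twice (dC (H_obj A C))"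
      using C.cls_eq_one by (simp add: one_mod2)
    show "chi (H_obj A C) ` carrier (dC (H_obj A C)) = {b \<in> carrier (dB (H_obj A C)). psi (H_obj A C) b = \<one>\<^bsub>dA (H_obj A C)\<^esub>}"
    proof (rule Set.set_eqI, rule iffI)
      fix b assume "b \<in> chi (H_obj A C) ` carrier (dC (H_obj A C))"
      then show "b \<in> {b \<in> carrier (dB (H_obj A C)). psi (H_obj A C) b = \<one>\<^bsub>dA (H_obj A C)\<^esub>}"
        using C.cls_carrier by (auto simp: two_tors_def)
    next
      fix b assume "b \<in> {b \<in> carrier (dB (H_obj A C)). psi (H_obj A C) b = \<one>\<^bsub>dA (H_obj A C)\<^esub>}"
      then obtain x where x: "x \<in> carrier (mod2 C)" "b = (x, \<one>\<^bsub>A\<^esub>)" by auto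
      then obtain c where "c \<in> carrier C" "x = cls C c" using mod2_surj by blast
      then show "b \<in> chi (H_obj A C) ` carrier (dC (H_obj A C))" using x by auto
    qed
    show "psi (H_obj A C) ` carrier (dB (H_obj A C)) = two_tors (dA (H_obj A C))"
    proof (rule Set.set_eqI, rule iffI)
      fix a assume "a \<in> two_tors (dA (H_obj A C))"
      then have "(\<one>\<^bsub>mod2 C\<^esub>, a) \<in> carrier (dB (H_obj A C))"
        using comm_group.axioms(2)[OF C.mod2_comm_group] group.is_monoid monoid.one_closed by fastforce
      then show "a \<in> psi (H_obj A C) ` carrier (dB (H_obj A C))" by force
    qed auto
  qed
qed


lemma hom_two_tors:
  assumes f: "f \<in> hom A0 A1" and g0: "group A0" and g1: "group A1" and a: "a \<in> two_tors A0"
  shows "f a \<in> two_tors A1"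
proof -
  have "a \<in> carrier A0" "a \<otimes>\<^bsub>A0\<^esub> a = \<one>\<^bsub>A0\<^esub>" using a by (auto simp: two_tors_def)
  then have "f a \<otimes>\<^bsub>A1\<^esub> f a = \<one>\<^bsub>A1\<^esub>" "f a \<in> carrier A1"
    using Group.hom_mult[OF f] hom_one[OF f g0 g1] hom_in_carrier[OF f] by metis+
  then show "f a \<in> two_tors A1" by (simp add: two_tors_def)
qed

lemma H_mor_simp: "H_mor C0 C1 (f, h, u) = (f, \<lambda>(x, a). (mod2_map C0 C1 h x \<otimes>\<^bsub>mod2 C1\<^esub> u a, f a), h)"
  by (simp add: H_mor_def)

lemma H_mor_mor:
  fixes A0 :: "'a monoid" and C0 :: "'c monoid" and A1 :: "'a1 monoid" and C1 :: "'c1 monoid"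
  assumes o0: "spp_obj A0 C0" and o1: "spp_obj A1 C1" and m: "spp_mor A0 C0 A1 C1 (f, h, u)"
  shows "eed_mor (H_obj A0 C0) (H_obj A1 C1) (H_mor C0 C1 (f, h, u))"
proof -
  interpret A0: comm_group A0 using o0 by (simp add: spp_obj_def)
  interpret C0: comm_group C0 using o0 by (simp add: spp_obj_def)
  interpret A1: comm_group A1 using o1 by (simp add: spp_obj_def)
  interpret C1: comm_group C1 using o1 by (simp add: spp_obj_def)
  interpret M1: comm_group "mod2 C1" by (rule C1.mod2_comm_group)
  interpret M0: comm_group "mod2 C0" by (rule C0.mod2_comm_group)
  have f: "f \<in> hom A0 A1" and h: "h \<in> hom C0 C1" and u: "u \<in> hom (tors2 A0) (mod2 C1)"
    using m by (auto simp: spp_mor_def)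
  have mh: "mod2_map C0 C1 h \<in> hom (mod2 C0) (mod2 C1)"
    by (rule mod2_map_hom[OF C0.comm_group_axioms C1.comm_group_axioms h])
  have ft: "\<And>a. a \<in> two_tors A0 \<Longrightarrow> f a \<in> two_tors A1"
  proof -
    fix a assume a: "a \<in> two_tors A0"
    then have "a \<in> carrier A0" "a \<otimes>\<^bsub>A0\<^esub> a = \<one>\<^bsub>A0\<^esub>" by (auto simp: two_tors_def)
    then have "f a \<otimes>\<^bsub>A1\<^esub> f a = \<one>\<^bsub>A1\<^esub>" "f a \<in> carrier A1"
      using Group.hom_mult[OF f] hom_one[OF f A0.is_group A1.is_group] hom_in_carrier[OF f] by metis+
    then show "f a \<in> two_tors A1" by (simp add: two_tors_def)
  qed
  have uc: "\<And>a. a \<in> two_tors A0 \<Longrightarrow> u a \<in> carrier (mod2 C1)"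
    using hom_in_carrier[OF u] by simp
  have mc: "\<And>x. x \<in> carrier (mod2 C0) \<Longrightarrow> mod2_map C0 C1 h x \<in> carrier (mod2 C1)"
    using hom_in_carrier[OF mh] by simp
  have tc: "\<And>a. a \<in> two_tors A0 \<Longrightarrow> a \<in> carrier A0" by (simp add: two_tors_def)
  have g: "(\<lambda>(x, a). (mod2_map C0 C1 h x \<otimes>\<^bsub>mod2 C1\<^esub> u a, f a)) \<in> hom (mod2 C0 \<times>\<times> tors2 A0) (mod2 C1 \<times>\<times> tors2 A1)"
  proof (rule homI)
    fix b assume "b \<in> carrier (mod2 C0 \<times>\<times> tors2 A0)"
    then show "(case b of (x, a) \<Rightarrow> (mod2_map C0 C1 h x \<otimes>\<^bsub>mod2 C1\<^esub> u a, f a)) \<in> carrier (mod2 C1 \<times>\<times> tors2 A1)"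
      using uc mc ft by auto
  next
    fix b b' assume b: "b \<in> carrier (mod2 C0 \<times>\<times> tors2 A0)" and b': "b' \<in> carrier (mod2 C0 \<times>\<times> tors2 A0)"
    obtain x a where xa: "b = (x, a)" by (cases b)
    obtain y c where yc: "b' = (y, c)" by (cases b')
    have x: "x \<in> carrier (mod2 C0)" "a \<in> two_tors A0" using b xa by auto
    have y: "y \<in> carrier (mod2 C0)" "c \<in> two_tors A0" using b' yc by auto
    have ac: "a \<otimes>\<^bsub>A0\<^esub> c \<in> two_tors A0" using x y A0.two_tors_mult by blast
    have e1: "mod2_map C0 C1 h (x \<otimes>\<^bsub>mod2 C0\<^esub> y) = mod2_map C0 C1 h x \<otimes>\<^bsub>mod2 C1\<^esub> mod2_map C0 C1 h y"
      using Group.hom_mult[OF mh] x y by blast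
    have e2: "u (a \<otimes>\<^bsub>A0\<^esub> c) = u a \<otimes>\<^bsub>mod2 C1\<^esub> u c"
      using Group.hom_mult[OF u] x y by simp
    have e3: "f (a \<otimes>\<^bsub>A0\<^esub> c) = f a \<otimes>\<^bsub>A1\<^esub> f c"
      using Group.hom_mult[OF f] x y tc by blast
    show "(case b \<otimes>\<^bsub>mod2 C0 \<times>\<times> tors2 A0\<^esub> b' of (x, a) \<Rightarrow> (mod2_map C0 C1 h x \<otimes>\<^bsub>mod2 C1\<^esub> u a, f a)) =
          (case b of (x, a) \<Rightarrow> (mod2_map C0 C1 h x \<otimes>\<^bsub>mod2 C1\<^esub> u a, f a)) \<otimes>\<^bsub>mod2 C1 \<times>\<times> tors2 A1\<^esub>
          (case b' of (x, a) \<Rightarrow> (mod2_map C0 C1 h x \<otimes>\<^bsub>mod2 C1\<^esub> u a, f a))"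
      using xa yc e1 e2 e3 x y uc mc by (simp add: M1.m_ac)
  qed
  have hom1: "h \<one>\<^bsub>C0\<^esub> = \<one>\<^bsub>C1\<^esub>" by (rule hom_one[OF h C0.is_group C1.is_group])
  have fom1: "f \<one>\<^bsub>A0\<^esub> = \<one>\<^bsub>A1\<^esub>" by (rule hom_one[OF f A0.is_group A1.is_group])
  have uom1: "u \<one>\<^bsub>A0\<^esub> = \<one>\<^bsub>mod2 C1\<^esub>"
    using hom_one[OF u A0.tors2_comm_group[THEN comm_group.axioms(2)] M1.is_group] by simp
  show ?thesis unfolding eed_mor_def H_mor_simp
    using f h g hom1 fom1 uom1 hom_in_carrier[OF h]
      mod2_map_cls[OF C0.comm_group_axioms C1.comm_group_axioms h] C1.cls_carrier
    by auto
qed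

lemma H_mor_id:
  fixes A :: "'a monoid" and C :: "'c monoid"
  assumes o: "spp_obj A C"
  shows "eed_mor_eq (H_obj A C) (H_mor C C (spp_id A C)) eed_id"
proof -
  interpret C: comm_group C using o by (simp add: spp_obj_def)
  interpret M: comm_group "mod2 C" by (rule C.mod2_comm_group)
  show ?thesis unfolding eed_mor_eq_def spp_id_def H_mor_simp eed_id_def
    using mod2_map_id[OF C.comm_group_axioms] by auto
qed


lemma H_mor_comp:
  fixes A0 :: "'a monoid" and C0 :: "'c monoid" and A1 :: "'a1 monoid" and C1 :: "'c1 monoid"
    and A2 :: "'a2 monoid" and C2 :: "'c2 monoid"
  assumes o0: "spp_obj A0 C0" and o1: "spp_obj A1 C1" and o2: "spp_obj A2 C2"
    and m0: "spp_mor A0 C0 A1 C1 (f0, h0, u0)" and m1: "spp_mor A1 C1 A2 C2 (f1, h1, u1)"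
  shows "eed_mor_eq (H_obj A0 C0) (H_mor C0 C2 (spp_comp C1 C2 (f0, h0, u0) (f1, h1, u1)))
         (eed_comp (H_mor C0 C1 (f0, h0, u0)) (H_mor C1 C2 (f1, h1, u1)))"
proof -
  interpret A0: comm_group A0 using o0 by (simp add: spp_obj_def)
  interpret C0: comm_group C0 using o0 by (simp add: spp_obj_def)
  interpret C1: comm_group C1 using o1 by (simp add: spp_obj_def)
  interpret C2: comm_group C2 using o2 by (simp add: spp_obj_def)
  interpret M1: comm_group "mod2 C1" by (rule C1.mod2_comm_group)
  interpret M2: comm_group "mod2 C2" by (rule C2.mod2_comm_group)
  have f0: "f0 \<in> hom A0 A1" and h0: "h0 \<in> hom C0 C1" and u0: "u0 \<in> hom (tors2 A0) (mod2 C1)"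
    using m0 by (auto simp: spp_mor_def)
  have f1: "f1 \<in> hom A1 A2" and h1: "h1 \<in> hom C1 C2" and u1: "u1 \<in> hom (tors2 A1) (mod2 C2)"
    using m1 by (auto simp: spp_mor_def)
  have mh0: "mod2_map C0 C1 h0 \<in> hom (mod2 C0) (mod2 C1)"
    by (rule mod2_map_hom[OF C0.comm_group_axioms C1.comm_group_axioms h0])
  have mh1: "mod2_map C1 C2 h1 \<in> hom (mod2 C1) (mod2 C2)"
    by (rule mod2_map_hom[OF C1.comm_group_axioms C2.comm_group_axioms h1])
  have ft: "\<And>a. a \<in> two_tors A0 \<Longrightarrow> f0 a \<in> two_tors A1"
    using hom_two_tors[OF f0] o0 o1 by (simp add: spp_obj_def comm_group.axioms(2))
  have key: "\<And>x a. x \<in> carrier (mod2 C0) \<Longrightarrow> a \<in> two_tors A0 \<Longrightarrow>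
     mod2_map C0 C2 (h1 \<circ> h0) x \<otimes>\<^bsub>mod2 C2\<^esub> (mod2_map C1 C2 h1 (u0 a) \<otimes>\<^bsub>mod2 C2\<^esub> u1 (f0 a))
     = mod2_map C1 C2 h1 (mod2_map C0 C1 h0 x \<otimes>\<^bsub>mod2 C1\<^esub> u0 a) \<otimes>\<^bsub>mod2 C2\<^esub> u1 (f0 a)"
  proof -
    fix x a assume x: "x \<in> carrier (mod2 C0)" and a: "a \<in> two_tors A0"
    have c1: "mod2_map C0 C1 h0 x \<in> carrier (mod2 C1)" using hom_in_carrier[OF mh0 x] .
    have c2: "u0 a \<in> carrier (mod2 C1)" using hom_in_carrier[OF u0] a by simp
    have c3: "u1 (f0 a) \<in> carrier (mod2 C2)" using hom_in_carrier[OF u1] ft[OF a] by simp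
    have c4: "mod2_map C1 C2 h1 (u0 a) \<in> carrier (mod2 C2)" using hom_in_carrier[OF mh1 c2] .
    have c5: "mod2_map C1 C2 h1 (mod2_map C0 C1 h0 x) \<in> carrier (mod2 C2)" using hom_in_carrier[OF mh1 c1] .
    show "?thesis x a"
      using Group.hom_mult[OF mh1 c1 c2] mod2_map_comp[OF C0.comm_group_axioms C1.comm_group_axioms C2.comm_group_axioms h0 h1 x]
        c3 c4 c5 by (simp add: M2.m_assoc)
  qed
  show ?thesis unfolding eed_mor_eq_def
    using key by (auto simp: spp_comp_def H_mor_simp eed_comp_def)
qed

lemma H_faithful:
  fixes A0 :: "'a monoid" and C0 :: "'c monoid" and A1 :: "'a1 monoid" and C1 :: "'c1 monoid"
  assumes o0: "spp_obj A0 C0" and o1: "spp_obj A1 C1" and m: "spp_mor A0 C0 A1 C1 (f, h, u)"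
    and m': "spp_mor A0 C0 A1 C1 (f', h', u')"
    and e: "eed_mor_eq (H_obj A0 C0) (H_mor C0 C1 (f, h, u)) (H_mor C0 C1 (f', h', u'))"
  shows "spp_mor_eq A0 C0 (f, h, u) (f', h', u')"
proof -
  interpret C0: comm_group C0 using o0 by (simp add: spp_obj_def)
  interpret C1: comm_group C1 using o1 by (simp add: spp_obj_def)
  interpret M0: comm_group "mod2 C0" by (rule C0.mod2_comm_group)
  interpret M1: comm_group "mod2 C1" by (rule C1.mod2_comm_group)
  have h: "h \<in> hom C0 C1" and u: "u \<in> hom (tors2 A0) (mod2 C1)" using m by (auto simp: spp_mor_def)
  have h': "h' \<in> hom C0 C1" and u': "u' \<in> hom (tors2 A0) (mod2 C1)" using m' by (auto simp: spp_mor_def)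
  have one: "\<And>k. k \<in> hom C0 C1 \<Longrightarrow> mod2_map C0 C1 k \<one>\<^bsub>mod2 C0\<^esub> = \<one>\<^bsub>mod2 C1\<^esub>"
    by (rule hom_one[OF mod2_map_hom[OF C0.comm_group_axioms C1.comm_group_axioms] M0.is_group M1.is_group])
  have eq: "\<forall>b\<in>carrier (mod2 C0 \<times>\<times> tors2 A0). (case b of (x, a) \<Rightarrow> (mod2_map C0 C1 h x \<otimes>\<^bsub>mod2 C1\<^esub> u a, f a))
     = (case b of (x, a) \<Rightarrow> (mod2_map C0 C1 h' x \<otimes>\<^bsub>mod2 C1\<^esub> u' a, f' a))"
    using e unfolding eed_mor_eq_def H_mor_simp by simp
  have "\<forall>a\<in>two_tors A0. u a = u' a"
  proof
    fix a assume a: "a \<in> two_tors A0"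
    then have "(\<one>\<^bsub>mod2 C0\<^esub>, a) \<in> carrier (mod2 C0 \<times>\<times> tors2 A0)" by simp
    then have "mod2_map C0 C1 h \<one>\<^bsub>mod2 C0\<^esub> \<otimes>\<^bsub>mod2 C1\<^esub> u a = mod2_map C0 C1 h' \<one>\<^bsub>mod2 C0\<^esub> \<otimes>\<^bsub>mod2 C1\<^esub> u' a"
      using eq by fastforce
    then show "u a = u' a" using one[OF h] one[OF h'] hom_in_carrier[OF u] hom_in_carrier[OF u'] a by simp
  qed
  then show ?thesis using e unfolding eed_mor_eq_def H_mor_simp spp_mor_eq_def by simp
qed


lemma H_full:
  fixes A0 :: "'a monoid" and C0 :: "'c monoid" and A1 :: "'a1 monoid" and C1 :: "'c1 monoid"
  assumes o0: "spp_obj A0 C0" and o1: "spp_obj A1 C1"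
    and M: "eed_mor (H_obj A0 C0) (H_obj A1 C1) (f, g, h)"
  shows "\<exists>m. spp_mor A0 C0 A1 C1 m \<and> eed_mor_eq (H_obj A0 C0) (H_mor C0 C1 m) (f, g, h)"
proof -
  interpret A0: comm_group A0 using o0 by (simp add: spp_obj_def)
  interpret C0: comm_group C0 using o0 by (simp add: spp_obj_def)
  interpret A1: comm_group A1 using o1 by (simp add: spp_obj_def)
  interpret C1: comm_group C1 using o1 by (simp add: spp_obj_def)
  interpret M0: comm_group "mod2 C0" by (rule C0.mod2_comm_group)
  interpret M1: comm_group "mod2 C1" by (rule C1.mod2_comm_group)
  have f: "f \<in> hom A0 A1" and g: "g \<in> hom (mod2 C0 \<times>\<times> tors2 A0) (mod2 C1 \<times>\<times> tors2 A1)"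
    and h: "h \<in> hom C0 C1"
    and ps: "\<And>b. b \<in> carrier (mod2 C0 \<times>\<times> tors2 A0) \<Longrightarrow> f (snd b) = snd (g b)"
    and ch: "\<And>c. c \<in> carrier C0 \<Longrightarrow> g (cls C0 c, \<one>\<^bsub>A0\<^esub>) = (cls C1 (h c), \<one>\<^bsub>A1\<^esub>)"
    using M unfolding eed_mor_def by (auto simp: case_prod_beta)
  define u where "u = (\<lambda>a. fst (g (\<one>\<^bsub>mod2 C0\<^esub>, a)))"
  have gc: "\<And>b. b \<in> carrier (mod2 C0) \<times> two_tors A0 \<Longrightarrow> g b \<in> carrier (mod2 C1) \<times> two_tors A1"
    using hom_in_carrier[OF g] by simp
  have one0: "\<one>\<^bsub>mod2 C0\<^esub> \<in> carrier (mod2 C0)" by simp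
  have u: "u \<in> hom (tors2 A0) (mod2 C1)"
  proof (rule homI)
    fix a assume "a \<in> carrier (tors2 A0)"
    then show "u a \<in> carrier (mod2 C1)" using gc one0 unfolding u_def by (simp add: mem_Times_iff)
  next
    fix a b assume a: "a \<in> carrier (tors2 A0)" and b: "b \<in> carrier (tors2 A0)"
    have "g ((\<one>\<^bsub>mod2 C0\<^esub>, a) \<otimes>\<^bsub>mod2 C0 \<times>\<times> tors2 A0\<^esub> (\<one>\<^bsub>mod2 C0\<^esub>, b)) =
          g (\<one>\<^bsub>mod2 C0\<^esub>, a) \<otimes>\<^bsub>mod2 C1 \<times>\<times> tors2 A1\<^esub> g (\<one>\<^bsub>mod2 C0\<^esub>, b)"
      using a b one0 by (intro Group.hom_mult[OF g]) auto
    then show "u (a \<otimes>\<^bsub>tors2 A0\<^esub> b) = u a \<otimes>\<^bsub>mod2 C1\<^esub> u b"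
      unfolding u_def by (simp add: mult_DirProd')
  qed
  have eq: "\<forall>b\<in>carrier (mod2 C0 \<times>\<times> tors2 A0).
     (case b of (x, a) \<Rightarrow> (mod2_map C0 C1 h x \<otimes>\<^bsub>mod2 C1\<^esub> u a, f a)) = g b"
  proof
    fix b assume b: "b \<in> carrier (mod2 C0 \<times>\<times> tors2 A0)"
    obtain x a where xa: "b = (x, a)" by (cases b)
    have x: "x \<in> carrier (mod2 C0)" and a: "a \<in> two_tors A0" using b xa by auto
    obtain c where c: "c \<in> carrier C0" "x = cls C0 c" using x mod2_surj by blast
    have aA: "a \<in> carrier A0" using a by (simp add: two_tors_def)
    have "(x, a) = (x, \<one>\<^bsub>A0\<^esub>) \<otimes>\<^bsub>mod2 C0 \<times>\<times> tors2 A0\<^esub> (\<one>\<^bsub>mod2 C0\<^esub>, a)"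
      using x aA by simp
    moreover have "g ((x, \<one>\<^bsub>A0\<^esub>) \<otimes>\<^bsub>mod2 C0 \<times>\<times> tors2 A0\<^esub> (\<one>\<^bsub>mod2 C0\<^esub>, a)) = g (x, \<one>\<^bsub>A0\<^esub>) \<otimes>\<^bsub>mod2 C1 \<times>\<times> tors2 A1\<^esub> g (\<one>\<^bsub>mod2 C0\<^esub>, a)"
      using x a one0 by (intro Group.hom_mult[OF g]) (auto simp: two_tors_def)
    ultimately have "g (x, a) = g (x, \<one>\<^bsub>A0\<^esub>) \<otimes>\<^bsub>mod2 C1 \<times>\<times> tors2 A1\<^esub> g (\<one>\<^bsub>mod2 C0\<^esub>, a)"
      by simp
    also have "g (x, \<one>\<^bsub>A0\<^esub>) = (cls C1 (h c), \<one>\<^bsub>A1\<^esub>)" using ch c by simp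
    also have "g (\<one>\<^bsub>mod2 C0\<^esub>, a) = (u a, f a)"
      using ps[of "(\<one>\<^bsub>mod2 C0\<^esub>, a)"] one0 a unfolding u_def by (simp add: prod_eq_iff)
    finally have "g (x, a) = (cls C1 (h c) \<otimes>\<^bsub>mod2 C1\<^esub> u a, f a)"
      using hom_in_carrier[OF f aA] by simp
    then show "(case b of (x, a) \<Rightarrow> (mod2_map C0 C1 h x \<otimes>\<^bsub>mod2 C1\<^esub> u a, f a)) = g b"
      using xa c mod2_map_cls[OF C0.comm_group_axioms C1.comm_group_axioms h] by simp
  qed
  have "spp_mor A0 C0 A1 C1 (f, h, u)" using f h u by (simp add: spp_mor_def)
  moreover have "eed_mor_eq (H_obj A0 C0) (H_mor C0 C1 (f, h, u)) (f, g, h)"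
    unfolding eed_mor_eq_def H_mor_simp using eq by simp
  ultimately show ?thesis by blast
qed


locale ez =
  fixes D :: "('a, 'b, 'c) eed"
  assumes ex: "exact_eed D"
    and e0: "\<forall>a\<in>carrier (dA D). eta D a = \<one>\<^bsub>dC D\<^esub>"
begin

lemma ext: "ext_eta_diagram D" using ex by (simp add: exact_eed_def)
lemma cgA: "comm_group (dA D)" using ext by (simp add: ext_eta_diagram_def)
lemma cgB: "comm_group (dB D)" using ext by (simp add: ext_eta_diagram_def)
lemma cgC: "comm_group (dC D)" using ext by (simp add: ext_eta_diagram_def)
lemma psi_hom: "psi D \<in> hom (dB D) (dA D)" using ext by (simp add: ext_eta_diagram_def)
lemma eta_hom: "eta D \<in> hom (dA D) (dC D)" using ext by (simp add: ext_eta_diagram_def)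
lemma chi_hom: "chi D \<in> hom (dC D) (dB D)" using ext by (simp add: ext_eta_diagram_def)
lemma psi_chi: "c \<in> carrier (dC D) \<Longrightarrow> psi D (chi D c) = \<one>\<^bsub>dA D\<^esub>"
  using ext by (simp add: ext_eta_diagram_def)
lemma ker_psi: "chi D ` carrier (dC D) = {b \<in> carrier (dB D). psi D b = \<one>\<^bsub>dA D\<^esub>}"
  using ex by (simp add: exact_eed_def)
lemma chi_inj2: "c \<in> carrier (dC D) \<Longrightarrow> chi D c = \<one>\<^bsub>dB D\<^esub> \<Longrightarrow> c \<in> twice (dC D)"
  using ex by (simp add: exact_eed_def)
lemma psi_onto: "psi D ` carrier (dB D) = two_tors (dA D)"
  using ex by (simp add: exact_eed_def)

sublocale A: comm_group "dA D" by (rule cgA)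
sublocale B: comm_group "dB D" by (rule cgB)
sublocale C: comm_group "dC D" by (rule cgC)

lemma psi_c: "b \<in> carrier (dB D) \<Longrightarrow> psi D b \<in> carrier (dA D)"
  using hom_in_carrier[OF psi_hom] .
lemma chi_c: "c \<in> carrier (dC D) \<Longrightarrow> chi D c \<in> carrier (dB D)"
  using hom_in_carrier[OF chi_hom] .
lemma psi_mult: "b \<in> carrier (dB D) \<Longrightarrow> b' \<in> carrier (dB D) \<Longrightarrow>
   psi D (b \<otimes>\<^bsub>dB D\<^esub> b') = psi D b \<otimes>\<^bsub>dA D\<^esub> psi D b'"
  using Group.hom_mult[OF psi_hom] .
lemma chi_mult: "c \<in> carrier (dC D) \<Longrightarrow> c' \<in> carrier (dC D) \<Longrightarrow>
   chi D (c \<otimes>\<^bsub>dC D\<^esub> c') = chi D c \<otimes>\<^bsub>dB D\<^esub> chi D c'"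
  using Group.hom_mult[OF chi_hom] .
lemma psi_one: "psi D \<one>\<^bsub>dB D\<^esub> = \<one>\<^bsub>dA D\<^esub>"
  by (rule hom_one[OF psi_hom B.is_group A.is_group])
lemma chi_one: "chi D \<one>\<^bsub>dC D\<^esub> = \<one>\<^bsub>dB D\<^esub>"
  by (rule hom_one[OF chi_hom C.is_group B.is_group])

lemma B_sq: "b \<in> carrier (dB D) \<Longrightarrow> b \<otimes>\<^bsub>dB D\<^esub> b = \<one>\<^bsub>dB D\<^esub>"
proof -
  assume b: "b \<in> carrier (dB D)"
  have "chi D (eta D (psi D b)) = b \<otimes>\<^bsub>dB D\<^esub> b" using ext b by (simp add: ext_eta_diagram_def)
  moreover have "eta D (psi D b) = \<one>\<^bsub>dC D\<^esub>" using e0 psi_c[OF b] by simp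
  ultimately show ?thesis using chi_one by simp
qed

lemma B_inv: "b \<in> carrier (dB D) \<Longrightarrow> inv\<^bsub>dB D\<^esub> b = b"
  using B_sq B.inv_equality by blast

lemma chi_twice: "c \<in> twice (dC D) \<Longrightarrow> chi D c = \<one>\<^bsub>dB D\<^esub>"
  by (auto simp: twice_def chi_mult chi_c B_sq)

lemma chi_eq_cls: assumes c: "c \<in> carrier (dC D)" and d: "d \<in> carrier (dC D)" and e: "chi D c = chi D d"
  shows "cls (dC D) c = cls (dC D) d"
proof -
  have "chi D (c \<otimes>\<^bsub>dC D\<^esub> inv\<^bsub>dC D\<^esub> d) = chi D d \<otimes>\<^bsub>dB D\<^esub> chi D (inv\<^bsub>dC D\<^esub> d)"
    using c d e by (simp add: chi_mult)
  also have "\<dots> = chi D (d \<otimes>\<^bsub>dC D\<^esub> inv\<^bsub>dC D\<^esub> d)" using d by (intro chi_mult[symmetric]) simp_all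
  also have "\<dots> = \<one>\<^bsub>dB D\<^esub>" using d chi_one by simp
  finally have "c \<otimes>\<^bsub>dC D\<^esub> inv\<^bsub>dC D\<^esub> d \<in> twice (dC D)" using c d chi_inj2 by simp
  then show ?thesis using C.cls_eq_iff[OF c d] by simp
qed

lemma cls_eq_chi: assumes c: "c \<in> carrier (dC D)" and d: "d \<in> carrier (dC D)" and e: "cls (dC D) c = cls (dC D) d"
  shows "chi D c = chi D d"
proof -
  have t: "c \<otimes>\<^bsub>dC D\<^esub> inv\<^bsub>dC D\<^esub> d \<in> twice (dC D)" using C.cls_eq_iff[OF c d] e by simp
  have "chi D c = chi D ((c \<otimes>\<^bsub>dC D\<^esub> inv\<^bsub>dC D\<^esub> d) \<otimes>\<^bsub>dC D\<^esub> d)"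
    using c d by (simp add: C.m_assoc)
  also have "\<dots> = chi D d" using chi_twice[OF t] c d by (simp add: chi_mult chi_c)
  finally show ?thesis .
qed

definition Kfam where
  "Kfam = {K. subgroup K (dB D) \<and> (\<forall>k\<in>K. psi D k = \<one>\<^bsub>dA D\<^esub> \<longrightarrow> k = \<one>\<^bsub>dB D\<^esub>)}"

lemma Kfam_Zorn: "\<exists>M\<in>Kfam. \<forall>Z\<in>Kfam. M \<subseteq> Z \<longrightarrow> Z = M"
proof (rule subset_Zorn_nonempty)
  show "Kfam \<noteq> {}" using B.triv_subgroup unfolding Kfam_def by blast
next
  fix \<C> assume ne: "\<C> \<noteq> {}" and ch: "subset.chain Kfam \<C>"
  have sub: "\<C> \<subseteq> Kfam" and tot: "\<forall>Z\<in>\<C>. \<forall>Y\<in>\<C>. Z \<subseteq> Y \<or> Y \<subseteq> Z"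
    using ch by (auto simp: subset_chain_def)
  have sg: "\<And>Z. Z \<in> \<C> \<Longrightarrow> subgroup Z (dB D)" using sub by (auto simp: Kfam_def)
  have "subgroup (\<Union>\<C>) (dB D)"
  proof (rule B.subgroupI)
    show "\<Union>\<C> \<subseteq> carrier (dB D)"
    proof
      fix x assume "x \<in> \<Union>\<C>"
      then obtain Z where Z: "Z \<in> \<C>" "x \<in> Z" by blast
      show "x \<in> carrier (dB D)" using subgroup.mem_carrier[OF sg[OF Z(1)] Z(2)] .
    qed
    obtain Z where Z: "Z \<in> \<C>" using ne by blast
    have "\<one>\<^bsub>dB D\<^esub> \<in> Z" using subgroup.one_closed[OF sg[OF Z]] .
    then show "\<Union>\<C> \<noteq> {}" using Z by blast
    fix a assume "a \<in> \<Union>\<C>"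
    then obtain Z where Z: "Z \<in> \<C>" "a \<in> Z" by blast
    have "inv\<^bsub>dB D\<^esub> a \<in> Z" using subgroup.m_inv_closed[OF sg[OF Z(1)] Z(2)] .
    then show "inv\<^bsub>dB D\<^esub> a \<in> \<Union>\<C>" using Z by blast
  next
    fix a b assume a: "a \<in> \<Union>\<C>" and b: "b \<in> \<Union>\<C>"
    then obtain Z Y where X: "Z \<in> \<C>" "a \<in> Z" and Y: "Y \<in> \<C>" "b \<in> Y" by blast
    show "a \<otimes>\<^bsub>dB D\<^esub> b \<in> \<Union>\<C>"
    proof (cases "Z \<subseteq> Y")
      case True
      then have "a \<otimes>\<^bsub>dB D\<^esub> b \<in> Y" using subgroup.m_closed[OF sg[OF Y(1)]] X Y by blast
      then show ?thesis using Y by blast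
    next
      case False then have "Y \<subseteq> Z" using tot X Y by blast
      then have "a \<otimes>\<^bsub>dB D\<^esub> b \<in> Z" using subgroup.m_closed[OF sg[OF X(1)]] X Y by blast
      then show ?thesis using X by blast
    qed
  qed
  moreover have "\<forall>k\<in>\<Union>\<C>. psi D k = \<one>\<^bsub>dA D\<^esub> \<longrightarrow> k = \<one>\<^bsub>dB D\<^esub>"
    using sub by (auto simp: Kfam_def)
  ultimately show "\<Union>\<C> \<in> Kfam" by (simp add: Kfam_def)
qed


definition K where "K = (SOME M. M \<in> Kfam \<and> (\<forall>Z\<in>Kfam. M \<subseteq> Z \<longrightarrow> Z = M))"

lemma K_prop: "K \<in> Kfam \<and> (\<forall>Z\<in>Kfam. K \<subseteq> Z \<longrightarrow> Z = K)"
  unfolding K_def using someI_ex[OF Kfam_Zorn[unfolded Bex_def]] .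

lemma K_sg: "subgroup K (dB D)" using K_prop by (simp add: Kfam_def)
lemma K_ker: "k \<in> K \<Longrightarrow> psi D k = \<one>\<^bsub>dA D\<^esub> \<Longrightarrow> k = \<one>\<^bsub>dB D\<^esub>" using K_prop by (simp add: Kfam_def)
lemma K_max: "Z \<in> Kfam \<Longrightarrow> K \<subseteq> Z \<Longrightarrow> Z = K" using K_prop by blast
lemma K_c: "k \<in> K \<Longrightarrow> k \<in> carrier (dB D)" using subgroup.mem_carrier[OF K_sg] .

lemma decomp: assumes b: "b \<in> carrier (dB D)"
  shows "\<exists>k\<in>K. \<exists>c\<in>carrier (dC D). b = k \<otimes>\<^bsub>dB D\<^esub> chi D c"
proof (rule ccontr)
  assume nb: "\<not> ?thesis"
  define K' where "K' = K \<union> (\<lambda>k. k \<otimes>\<^bsub>dB D\<^esub> b) ` K"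
  have i1: "\<And>k. k \<in> K \<Longrightarrow> k \<in> K'" unfolding K'_def by (rule UnI1)
  have i2: "\<And>k. k \<in> K \<Longrightarrow> k \<otimes>\<^bsub>dB D\<^esub> b \<in> K'" unfolding K'_def by (intro UnI2 imageI)
  have cases: "\<And>x. x \<in> K' \<Longrightarrow> x \<in> K \<or> (\<exists>k\<in>K. x = k \<otimes>\<^bsub>dB D\<^esub> b)"
    unfolding K'_def by blast
  have K'c: "\<And>x. x \<in> K' \<Longrightarrow> x \<in> carrier (dB D)"
  proof -
    fix x assume "x \<in> K'"
    then have "x \<in> K \<or> (\<exists>k\<in>K. x = k \<otimes>\<^bsub>dB D\<^esub> b)" by (rule cases)
    then show "x \<in> carrier (dB D)" using K_c b by (elim disjE bexE) simp_all
  qed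
  have mc: "\<And>k k'. k \<in> K \<Longrightarrow> k' \<in> K \<Longrightarrow> k \<otimes>\<^bsub>dB D\<^esub> k' \<in> K"
    using subgroup.m_closed[OF K_sg] .
  have one: "\<one>\<^bsub>dB D\<^esub> \<in> K" using subgroup.one_closed[OF K_sg] .
  have "subgroup K' (dB D)"
  proof (rule B.subgroupI)
    show "K' \<subseteq> carrier (dB D)" using K'c by (rule subsetI)
    show "K' \<noteq> {}" using i1[OF one] by blast
    fix a assume a: "a \<in> K'"
    then show "inv\<^bsub>dB D\<^esub> a \<in> K'" using B_inv[OF K'c[OF a]] by simp
  next
    fix x y assume x: "x \<in> K'" and y: "y \<in> K'"
    have xc: "x \<in> carrier (dB D)" and yc: "y \<in> carrier (dB D)" using K'c x y by auto
    show "x \<otimes>\<^bsub>dB D\<^esub> y \<in> K'"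
    proof (cases "x \<in> K")
      case xK: True
      show ?thesis
      proof (cases "y \<in> K")
        case True then show ?thesis using i1 mc xK by simp
      next
        case False
        then obtain k where k: "k \<in> K" "y = k \<otimes>\<^bsub>dB D\<^esub> b" using cases[OF y] by blast
        then have "x \<otimes>\<^bsub>dB D\<^esub> y = (x \<otimes>\<^bsub>dB D\<^esub> k) \<otimes>\<^bsub>dB D\<^esub> b"
          using xc K_c b by (simp add: B.m_assoc)
        then show ?thesis using i2[OF mc[OF xK k(1)]] by simp
      qed
    next
      case xnK: False
      then obtain k where k: "k \<in> K" "x = k \<otimes>\<^bsub>dB D\<^esub> b" using cases[OF x] by blast
      show ?thesis
      proof (cases "y \<in> K")
        case True
        then have "x \<otimes>\<^bsub>dB D\<^esub> y = (k \<otimes>\<^bsub>dB D\<^esub> y) \<otimes>\<^bsub>dB D\<^esub> b"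
          using k K_c b yc by (simp add: B.m_ac)
        then show ?thesis using i2[OF mc[OF k(1) True]] by simp
      next
        case False
        then obtain k' where k': "k' \<in> K" "y = k' \<otimes>\<^bsub>dB D\<^esub> b" using cases[OF y] by blast
        have kc: "k \<in> carrier (dB D)" "k' \<in> carrier (dB D)" using K_c k k' by auto
        have "x \<otimes>\<^bsub>dB D\<^esub> y = (k \<otimes>\<^bsub>dB D\<^esub> k') \<otimes>\<^bsub>dB D\<^esub> (b \<otimes>\<^bsub>dB D\<^esub> b)"
          using k(2) k'(2) kc b by (simp add: B.m_ac)
        also have "\<dots> = k \<otimes>\<^bsub>dB D\<^esub> k'" using B_sq[OF b] kc by simp
        finally show ?thesis using i1[OF mc[OF k(1) k'(1)]] by simp
      qed
    qed
  qed
  moreover have "\<forall>x\<in>K'. psi D x = \<one>\<^bsub>dA D\<^esub> \<longrightarrow> x = \<one>\<^bsub>dB D\<^esub>"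
  proof (intro ballI impI)
    fix x assume x: "x \<in> K'" and px: "psi D x = \<one>\<^bsub>dA D\<^esub>"
    show "x = \<one>\<^bsub>dB D\<^esub>"
    proof (cases "x \<in> K")
      case True then show ?thesis using K_ker px by blast
    next
      case False
      then obtain k where k: "k \<in> K" "x = k \<otimes>\<^bsub>dB D\<^esub> b" using cases[OF x] by blast
      have "x \<in> {b \<in> carrier (dB D). psi D b = \<one>\<^bsub>dA D\<^esub>}" using px K'c[OF x] by simp
      then have "x \<in> chi D ` carrier (dC D)" using ker_psi by simp
      then obtain c where c: "c \<in> carrier (dC D)" "x = chi D c" by (rule imageE) 
      have kc: "k \<in> carrier (dB D)" using K_c k by auto
      have "k \<otimes>\<^bsub>dB D\<^esub> x = (k \<otimes>\<^bsub>dB D\<^esub> k) \<otimes>\<^bsub>dB D\<^esub> b"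
        using k(2) kc b by (simp add: B.m_assoc)
      also have "\<dots> = b" using B_sq[OF kc] b by simp
      finally have "b = k \<otimes>\<^bsub>dB D\<^esub> chi D c" using c by simp
      then show ?thesis using nb k(1) c(1) by blast
    qed
  qed
  ultimately have "K' \<in> Kfam" by (simp add: Kfam_def)
  moreover have "K \<subseteq> K'" using i1 by (rule subsetI)
  ultimately have "K' = K" by (rule K_max)
  moreover have "b \<in> K'" using i2[OF one] b by simp
  ultimately have "b \<in> K" by simp
  moreover have "b = b \<otimes>\<^bsub>dB D\<^esub> chi D \<one>\<^bsub>dC D\<^esub>" using chi_one b by simp
  ultimately show False using nb by blast
qed

lemma psi_tt: "b \<in> carrier (dB D) \<Longrightarrow> psi D b \<in> two_tors (dA D)"
  using psi_onto by blast

lemma K_psi_inj: assumes k: "k \<in> K" and k': "k' \<in> K" and e: "psi D k = psi D k'"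
  shows "k = k'"
proof -
  have kc: "k \<in> carrier (dB D)" "k' \<in> carrier (dB D)" using k k' K_c by auto
  have "psi D (k \<otimes>\<^bsub>dB D\<^esub> k') = psi D k' \<otimes>\<^bsub>dA D\<^esub> psi D k'" using kc e psi_mult by simp
  also have "\<dots> = \<one>\<^bsub>dA D\<^esub>" using psi_tt[OF kc(2)] by (simp add: two_tors_def)
  finally have "k \<otimes>\<^bsub>dB D\<^esub> k' = \<one>\<^bsub>dB D\<^esub>"
    using K_ker subgroup.m_closed[OF K_sg k k'] by blast
  then have "k \<otimes>\<^bsub>dB D\<^esub> k' \<otimes>\<^bsub>dB D\<^esub> k' = k'" using kc by simp
  then show ?thesis using kc B_sq by (simp add: B.m_assoc)
qed

lemma K_psi_surj: assumes a: "a \<in> two_tors (dA D)" shows "\<exists>k\<in>K. psi D k = a"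
proof -
  obtain b where b: "b \<in> carrier (dB D)" "a = psi D b" using a psi_onto by blast
  obtain k c where kc: "k \<in> K" "c \<in> carrier (dC D)" "b = k \<otimes>\<^bsub>dB D\<^esub> chi D c" using decomp[OF b(1)] by blast
  have "psi D b = psi D k" using kc K_c chi_c psi_mult psi_chi psi_c by simp
  then have "psi D k = a" using b by simp
  then show ?thesis using kc(1) by (rule bexI)
qed

definition s where "s a = (THE k. k \<in> K \<and> psi D k = a)"

lemma s_prop: assumes a: "a \<in> two_tors (dA D)" shows "s a \<in> K \<and> psi D (s a) = a"
proof -
  have "\<exists>!k. k \<in> K \<and> psi D k = a" using K_psi_surj[OF a] K_psi_inj by blast
  then show ?thesis unfolding s_def by (rule theI')
qed

lemma s_unique: "k \<in> K \<Longrightarrow> psi D k = a \<Longrightarrow> s a = k"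
  using s_prop K_psi_inj psi_tt K_c by metis

lemma s_c: "a \<in> two_tors (dA D) \<Longrightarrow> s a \<in> carrier (dB D)"
  using s_prop K_c by blast

lemma s_hom: "s \<in> hom (tors2 (dA D)) (dB D)"
proof (rule homI)
  fix a assume "a \<in> carrier (tors2 (dA D))" then show "s a \<in> carrier (dB D)" using s_c by simp
next
  fix a a' assume a: "a \<in> carrier (tors2 (dA D))" and a': "a' \<in> carrier (tors2 (dA D))"
  have p: "s a \<in> K" "psi D (s a) = a" "s a' \<in> K" "psi D (s a') = a'" using s_prop a a' by auto
  have "s (a \<otimes>\<^bsub>dA D\<^esub> a') = s a \<otimes>\<^bsub>dB D\<^esub> s a'"
    using p K_c psi_mult subgroup.m_closed[OF K_sg] by (intro s_unique) auto
  then show "s (a \<otimes>\<^bsub>tors2 (dA D)\<^esub> a') = s a \<otimes>\<^bsub>dB D\<^esub> s a'" by simp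
qed

lemma s_one: "s \<one>\<^bsub>dA D\<^esub> = \<one>\<^bsub>dB D\<^esub>"
  using s_unique subgroup.one_closed[OF K_sg] psi_one by blast

lemma r_ex: assumes b: "b \<in> carrier (dB D)"
  shows "\<exists>c. c \<in> carrier (dC D) \<and> chi D c = b \<otimes>\<^bsub>dB D\<^esub> s (psi D b)"
proof -
  have t: "psi D b \<in> two_tors (dA D)" by (rule psi_tt[OF b])
  have sc: "s (psi D b) \<in> carrier (dB D)" "psi D (s (psi D b)) = psi D b" using s_prop[OF t] s_c[OF t] by auto
  have "psi D (b \<otimes>\<^bsub>dB D\<^esub> s (psi D b)) = psi D b \<otimes>\<^bsub>dA D\<^esub> psi D b" using sc b psi_mult by simp
  also have "\<dots> = \<one>\<^bsub>dA D\<^esub>" using t by (simp add: two_tors_def)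
  finally have "b \<otimes>\<^bsub>dB D\<^esub> s (psi D b) \<in> chi D ` carrier (dC D)" using ker_psi b sc by auto
  then show ?thesis by force
qed

definition r where "r b = cls (dC D) (SOME c. c \<in> carrier (dC D) \<and> chi D c = b \<otimes>\<^bsub>dB D\<^esub> s (psi D b))"

lemma r_eq: assumes b: "b \<in> carrier (dB D)" and c: "c \<in> carrier (dC D)" and e: "chi D c = b \<otimes>\<^bsub>dB D\<^esub> s (psi D b)"
  shows "r b = cls (dC D) c"
proof -
  let ?c = "SOME c. c \<in> carrier (dC D) \<and> chi D c = b \<otimes>\<^bsub>dB D\<^esub> s (psi D b)"
  have "?c \<in> carrier (dC D) \<and> chi D ?c = b \<otimes>\<^bsub>dB D\<^esub> s (psi D b)" using someI_ex[OF r_ex[OF b]] .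
  then show ?thesis unfolding r_def using chi_eq_cls c e by metis
qed

lemma r_c: "b \<in> carrier (dB D) \<Longrightarrow> r b \<in> carrier (mod2 (dC D))"
  using r_ex r_eq C.cls_carrier by metis

definition chibar where "chibar x = chi D (SOME c. c \<in> carrier (dC D) \<and> x = cls (dC D) c)"

lemma chibar_cls: assumes c: "c \<in> carrier (dC D)" shows "chibar (cls (dC D) c) = chi D c"
proof -
  let ?c = "SOME d. d \<in> carrier (dC D) \<and> cls (dC D) c = cls (dC D) d"
  have "?c \<in> carrier (dC D) \<and> cls (dC D) c = cls (dC D) ?c" by (rule someI[of _ c]) (simp add: c)
  then show ?thesis unfolding chibar_def using cls_eq_chi c by metis
qed


definition Fg where "Fg = (\<lambda>(x, a). chibar x \<otimes>\<^bsub>dB D\<^esub> s a)"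
definition Gg where "Gg = (\<lambda>b. (r b, psi D b))"

lemma Fg_cls: "c \<in> carrier (dC D) \<Longrightarrow> Fg (cls (dC D) c, a) = chi D c \<otimes>\<^bsub>dB D\<^esub> s a"
  by (simp add: Fg_def chibar_cls)

lemma Fg_hom: "Fg \<in> hom (mod2 (dC D) \<times>\<times> tors2 (dA D)) (dB D)"
proof (rule homI)
  fix y assume "y \<in> carrier (mod2 (dC D) \<times>\<times> tors2 (dA D))"
  then obtain x a where y: "y = (x, a)" "x \<in> carrier (mod2 (dC D))" "a \<in> two_tors (dA D)" by auto
  then obtain c where c: "c \<in> carrier (dC D)" "x = cls (dC D) c" using mod2_surj by blast
  show "Fg y \<in> carrier (dB D)" using y c Fg_cls chi_c s_c by simp
next
  fix y y' assume y0: "y \<in> carrier (mod2 (dC D) \<times>\<times> tors2 (dA D))" and y1: "y' \<in> carrier (mod2 (dC D) \<times>\<times> tors2 (dA D))"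
  obtain x a where y: "y = (x, a)" "x \<in> carrier (mod2 (dC D))" "a \<in> two_tors (dA D)" using y0 by auto
  obtain x' a' where y': "y' = (x', a')" "x' \<in> carrier (mod2 (dC D))" "a' \<in> two_tors (dA D)" using y1 by auto
  obtain c where c: "c \<in> carrier (dC D)" "x = cls (dC D) c" using y mod2_surj by blast
  obtain c' where c': "c' \<in> carrier (dC D)" "x' = cls (dC D) c'" using y' mod2_surj by blast
  have "y \<otimes>\<^bsub>mod2 (dC D) \<times>\<times> tors2 (dA D)\<^esub> y' = (cls (dC D) (c \<otimes>\<^bsub>dC D\<^esub> c'), a \<otimes>\<^bsub>dA D\<^esub> a')"
    using y y' c c' C.cls_mult by simp
  then have "Fg (y \<otimes>\<^bsub>mod2 (dC D) \<times>\<times> tors2 (dA D)\<^esub> y') = chi D (c \<otimes>\<^bsub>dC D\<^esub> c') \<otimes>\<^bsub>dB D\<^esub> s (a \<otimes>\<^bsub>dA D\<^esub> a')"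
    using c c' Fg_cls by simp
  also have "\<dots> = (chi D c \<otimes>\<^bsub>dB D\<^esub> chi D c') \<otimes>\<^bsub>dB D\<^esub> (s a \<otimes>\<^bsub>dB D\<^esub> s a')"
    using c c' y y' chi_mult Group.hom_mult[OF s_hom] by simp
  also have "\<dots> = (chi D c \<otimes>\<^bsub>dB D\<^esub> s a) \<otimes>\<^bsub>dB D\<^esub> (chi D c' \<otimes>\<^bsub>dB D\<^esub> s a')"
    using c c' y y' chi_c s_c by (simp add: B.m_ac)
  finally show "Fg (y \<otimes>\<^bsub>mod2 (dC D) \<times>\<times> tors2 (dA D)\<^esub> y') = Fg y \<otimes>\<^bsub>dB D\<^esub> Fg y'"
    using y y' c c' Fg_cls by simp
qed

lemma r_hom: "r \<in> hom (dB D) (mod2 (dC D))"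
proof (rule homI)
  fix b assume "b \<in> carrier (dB D)" then show "r b \<in> carrier (mod2 (dC D))" by (rule r_c)
next
  fix b b' assume b: "b \<in> carrier (dB D)" and b': "b' \<in> carrier (dB D)"
  obtain c where c: "c \<in> carrier (dC D)" "chi D c = b \<otimes>\<^bsub>dB D\<^esub> s (psi D b)" using r_ex[OF b] by blast
  obtain c' where c': "c' \<in> carrier (dC D)" "chi D c' = b' \<otimes>\<^bsub>dB D\<^esub> s (psi D b')" using r_ex[OF b'] by blast
  have t: "psi D b \<in> two_tors (dA D)" "psi D b' \<in> two_tors (dA D)" using psi_tt b b' by auto
  have bb: "b \<otimes>\<^bsub>dB D\<^esub> b' \<in> carrier (dB D)" using b b' by simp
  have "chi D (c \<otimes>\<^bsub>dC D\<^esub> c') = (b \<otimes>\<^bsub>dB D\<^esub> s (psi D b)) \<otimes>\<^bsub>dB D\<^esub> (b' \<otimes>\<^bsub>dB D\<^esub> s (psi D b'))"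
    using c c' chi_mult by simp
  also have "\<dots> = (b \<otimes>\<^bsub>dB D\<^esub> b') \<otimes>\<^bsub>dB D\<^esub> (s (psi D b) \<otimes>\<^bsub>dB D\<^esub> s (psi D b'))"
    using b b' s_c t by (simp add: B.m_ac)
  also have "s (psi D b) \<otimes>\<^bsub>dB D\<^esub> s (psi D b') = s (psi D (b \<otimes>\<^bsub>dB D\<^esub> b'))"
    using Group.hom_mult[OF s_hom] t psi_mult b b' by simp
  finally have "r (b \<otimes>\<^bsub>dB D\<^esub> b') = cls (dC D) (c \<otimes>\<^bsub>dC D\<^esub> c')"
    using r_eq[OF bb] c c' by simp
  then show "r (b \<otimes>\<^bsub>dB D\<^esub> b') = r b \<otimes>\<^bsub>mod2 (dC D)\<^esub> r b'"
    using r_eq[OF b c(1,2)] r_eq[OF b' c'(1,2)] C.cls_mult c c' by simp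
qed

lemma Gg_hom: "Gg \<in> hom (dB D) (mod2 (dC D) \<times>\<times> tors2 (dA D))"
proof -
  have "psi D \<in> hom (dB D) (tors2 (dA D))"
    using psi_hom psi_tt by (auto simp: hom_def)
  then show ?thesis unfolding Gg_def using r_hom by (simp add: hom_paired)
qed

lemma r_chi: "c \<in> carrier (dC D) \<Longrightarrow> r (chi D c) = cls (dC D) c"
  using r_eq[OF chi_c] psi_chi s_one chi_c by simp

lemma GF: assumes x: "x \<in> carrier (mod2 (dC D))" and a: "a \<in> two_tors (dA D)"
  shows "Gg (Fg (x, a)) = (x, a)"
proof -
  obtain c where c: "c \<in> carrier (dC D)" "x = cls (dC D) c" using x mod2_surj by blast
  let ?b = "chi D c \<otimes>\<^bsub>dB D\<^esub> s a"
  have sa: "s a \<in> carrier (dB D)" "psi D (s a) = a" using s_c s_prop a by auto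
  have bc: "?b \<in> carrier (dB D)" using sa c chi_c by simp
  have aA: "a \<in> carrier (dA D)" using a by (simp add: two_tors_def)
  have pb: "psi D ?b = a" using psi_mult chi_c c sa psi_chi psi_c aA by simp
  have "?b \<otimes>\<^bsub>dB D\<^esub> s (psi D ?b) = chi D c \<otimes>\<^bsub>dB D\<^esub> (s a \<otimes>\<^bsub>dB D\<^esub> s a)"
    using pb sa c chi_c by (simp add: B.m_assoc)
  also have "\<dots> = chi D c" using B_sq[OF sa(1)] c chi_c by simp
  finally have "r ?b = cls (dC D) c" using r_eq[OF bc c(1)] by simp
  then show ?thesis using c pb Fg_cls by (simp add: Gg_def)
qed

lemma FG: assumes b: "b \<in> carrier (dB D)" shows "Fg (Gg b) = b"
proof -
  obtain c where c: "c \<in> carrier (dC D)" "chi D c = b \<otimes>\<^bsub>dB D\<^esub> s (psi D b)" using r_ex[OF b] by blast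
  have sc: "s (psi D b) \<in> carrier (dB D)" using s_c psi_tt b by blast
  have "Fg (Gg b) = chi D c \<otimes>\<^bsub>dB D\<^esub> s (psi D b)" using r_eq[OF b c(1,2)] c Fg_cls by (simp add: Gg_def)
  also have "\<dots> = b \<otimes>\<^bsub>dB D\<^esub> (s (psi D b) \<otimes>\<^bsub>dB D\<^esub> s (psi D b))" using c b sc by (simp add: B.m_assoc)
  also have "\<dots> = b" using B_sq[OF sc] b by simp
  finally show ?thesis .
qed

lemma id_hom': "id \<in> hom G G" by (simp add: hom_def)

lemma ess_surj:
  "\<exists>(A :: 'a monoid) (C :: 'c monoid) F G.
          spp_obj A C \<and> eed_mor (H_obj A C) D F \<and> eed_mor D (H_obj A C) G \<and>
          eed_mor_eq (H_obj A C) (eed_comp F G) eed_id \<and> eed_mor_eq D (eed_comp G F) eed_id"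
proof (intro exI conjI)
  show "spp_obj (dA D) (dC D)" by (simp add: spp_obj_def cgA cgC)
  have p1: "\<forall>b\<in>carrier (mod2 (dC D) \<times>\<times> tors2 (dA D)). (case b of (x, a) \<Rightarrow> a) = psi D (Fg b)"
  proof
    fix b assume b: "b \<in> carrier (mod2 (dC D) \<times>\<times> tors2 (dA D))"
    then obtain x a where y: "b = (x, a)" "x \<in> carrier (mod2 (dC D))" "a \<in> two_tors (dA D)" by auto
    obtain c where c: "c \<in> carrier (dC D)" "x = cls (dC D) c" using y mod2_surj by blast
    have sa: "s a \<in> carrier (dB D)" "psi D (s a) = a" using s_c s_prop y by auto
    have aA: "a \<in> carrier (dA D)" using y by (simp add: two_tors_def)
    show "(case b of (x, a) \<Rightarrow> a) = psi D (Fg b)"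
      using y c Fg_cls psi_mult chi_c sa psi_chi psi_c aA by simp
  qed
  have p2: "\<forall>c\<in>carrier (dC D). Fg (cls (dC D) c, \<one>\<^bsub>dA D\<^esub>) = chi D c"
    using Fg_cls s_one chi_c by simp
  show "eed_mor (H_obj (dA D) (dC D)) D (id, Fg, id)"
    unfolding eed_mor_def using p1 p2 e0 Fg_hom by (simp add: id_hom')
  show "eed_mor D (H_obj (dA D) (dC D)) (id, Gg, id)"
    unfolding eed_mor_def
    using Gg_hom e0 r_chi psi_chi by (simp add: id_hom' Gg_def)
  show "eed_mor_eq (H_obj (dA D) (dC D)) (eed_comp (id, Fg, id) (id, Gg, id)) eed_id"
    unfolding eed_mor_eq_def eed_comp_def eed_id_def using GF by auto
  show "eed_mor_eq D (eed_comp (id, Gg, id) (id, Fg, id)) eed_id"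
    unfolding eed_mor_eq_def eed_comp_def eed_id_def using FG by auto
qed

end

theorem proposition3p17:
  shows
  \<comment> \<open>H is well defined on objects, landing in exact diagrams with eta = 0\<close>
  "(\<forall>(A :: 'a monoid) (C :: 'c monoid). spp_obj A C \<longrightarrow>
       exact_eed (H_obj A C) \<and> (\<forall>a \<in> carrier A. eta (H_obj A C) a = \<one>\<^bsub>C\<^esub>)) \<and>
   \<comment> \<open>H is well defined on morphisms\<close>
   (\<forall>(A0 :: 'a monoid) (C0 :: 'c monoid) (A1 :: 'a1 monoid) (C1 :: 'c1 monoid) m.
       spp_obj A0 C0 \<and> spp_obj A1 C1 \<and> spp_mor A0 C0 A1 C1 m \<longrightarrow>
       eed_mor (H_obj A0 C0) (H_obj A1 C1) (H_mor C0 C1 m)) \<and>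
   \<comment> \<open>H preserves identities\<close>
   (\<forall>(A :: 'a monoid) (C :: 'c monoid). spp_obj A C \<longrightarrow>
       eed_mor_eq (H_obj A C) (H_mor C C (spp_id A C)) eed_id) \<and>
   \<comment> \<open>H preserves composition\<close>
   (\<forall>(A0 :: 'a monoid) (C0 :: 'c monoid) (A1 :: 'a1 monoid) (C1 :: 'c1 monoid)
      (A2 :: 'a2 monoid) (C2 :: 'c2 monoid) m0 m1.
       spp_obj A0 C0 \<and> spp_obj A1 C1 \<and> spp_obj A2 C2 \<and>
       spp_mor A0 C0 A1 C1 m0 \<and> spp_mor A1 C1 A2 C2 m1 \<longrightarrow>
       eed_mor_eq (H_obj A0 C0) (H_mor C0 C2 (spp_comp C1 C2 m0 m1))
         (eed_comp (H_mor C0 C1 m0) (H_mor C1 C2 m1))) \<and>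
   \<comment> \<open>H is faithful\<close>
   (\<forall>(A0 :: 'a monoid) (C0 :: 'c monoid) (A1 :: 'a1 monoid) (C1 :: 'c1 monoid) m m'.
       spp_obj A0 C0 \<and> spp_obj A1 C1 \<and> spp_mor A0 C0 A1 C1 m \<and> spp_mor A0 C0 A1 C1 m' \<and>
       eed_mor_eq (H_obj A0 C0) (H_mor C0 C1 m) (H_mor C0 C1 m') \<longrightarrow>
       spp_mor_eq A0 C0 m m') \<and>
   \<comment> \<open>H is full\<close>
   (\<forall>(A0 :: 'a monoid) (C0 :: 'c monoid) (A1 :: 'a1 monoid) (C1 :: 'c1 monoid) M.
       spp_obj A0 C0 \<and> spp_obj A1 C1 \<and> eed_mor (H_obj A0 C0) (H_obj A1 C1) M \<longrightarrow>
       (\<exists>m. spp_mor A0 C0 A1 C1 m \<and> eed_mor_eq (H_obj A0 C0) (H_mor C0 C1 m) M)) \<and>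
   \<comment> \<open>H is essentially surjective onto exact diagrams with eta = 0\<close>
   (\<forall>D :: ('a, 'b, 'c) eed.
       exact_eed D \<and> (\<forall>a \<in> carrier (dA D). eta D a = \<one>\<^bsub>dC D\<^esub>) \<longrightarrow>
       (\<exists>(A :: 'a monoid) (C :: 'c monoid) F G.
          spp_obj A C \<and> eed_mor (H_obj A C) D F \<and> eed_mor D (H_obj A C) G \<and>
          eed_mor_eq (H_obj A C) (eed_comp F G) eed_id \<and> eed_mor_eq D (eed_comp G F) eed_id))"
proof (intro conjI allI impI)
  fix A :: "'a monoid" and C :: "'c monoid"
  assume o: "spp_obj A C"
  show "exact_eed (H_obj A C)" using H_obj_exact[OF o] .
  show "\<forall>a\<in>carrier A. eta (H_obj A C) a = \<one>\<^bsub>C\<^esub>" by simp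
next
  fix A0 :: "'a monoid" and C0 :: "'c monoid" and A1 :: "'a1 monoid" and C1 :: "'c1 monoid" and m
  assume a: "spp_obj A0 C0 \<and> spp_obj A1 C1 \<and> spp_mor A0 C0 A1 C1 m"
  obtain f h u where m: "m = (f, h, u)" by (cases m)
  show "eed_mor (H_obj A0 C0) (H_obj A1 C1) (H_mor C0 C1 m)"
    using H_mor_mor a unfolding m by blast
next
  fix A :: "'a monoid" and C :: "'c monoid"
  assume o: "spp_obj A C"
  show "eed_mor_eq (H_obj A C) (H_mor C C (spp_id A C)) eed_id" using H_mor_id[OF o] .
next
  fix A0 :: "'a monoid" and C0 :: "'c monoid" and A1 :: "'a1 monoid" and C1 :: "'c1 monoid"
    and A2 :: "'a2 monoid" and C2 :: "'c2 monoid" and m0 m1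
  assume a: "spp_obj A0 C0 \<and> spp_obj A1 C1 \<and> spp_obj A2 C2 \<and> spp_mor A0 C0 A1 C1 m0 \<and> spp_mor A1 C1 A2 C2 m1"
  obtain f0 h0 u0 where m0: "m0 = (f0, h0, u0)" by (cases m0)
  obtain f1 h1 u1 where m1: "m1 = (f1, h1, u1)" by (cases m1)
  show "eed_mor_eq (H_obj A0 C0) (H_mor C0 C2 (spp_comp C1 C2 m0 m1))
         (eed_comp (H_mor C0 C1 m0) (H_mor C1 C2 m1))"
    using H_mor_comp a unfolding m0 m1 by blast
next
  fix A0 :: "'a monoid" and C0 :: "'c monoid" and A1 :: "'a1 monoid" and C1 :: "'c1 monoid" and m m'
  assume a: "spp_obj A0 C0 \<and> spp_obj A1 C1 \<and> spp_mor A0 C0 A1 C1 m \<and> spp_mor A0 C0 A1 C1 m' \<and>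
       eed_mor_eq (H_obj A0 C0) (H_mor C0 C1 m) (H_mor C0 C1 m')"
  obtain f h u where m: "m = (f, h, u)" by (cases m)
  obtain f' h' u' where m': "m' = (f', h', u')" by (cases m')
  show "spp_mor_eq A0 C0 m m'" using H_faithful a unfolding m m' by blast
next
  fix A0 :: "'a monoid" and C0 :: "'c monoid" and A1 :: "'a1 monoid" and C1 :: "'c1 monoid" and M
  assume a: "spp_obj A0 C0 \<and> spp_obj A1 C1 \<and> eed_mor (H_obj A0 C0) (H_obj A1 C1) M"
  obtain f g h where M: "M = (f, g, h)" by (cases M)
  show "\<exists>m. spp_mor A0 C0 A1 C1 m \<and> eed_mor_eq (H_obj A0 C0) (H_mor C0 C1 m) M"
    using H_full a unfolding M by blast
next
  fix D :: "('a, 'b, 'c) eed"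
  assume a: "exact_eed D \<and> (\<forall>a \<in> carrier (dA D). eta D a = \<one>\<^bsub>dC D\<^esub>)"
  then have "ez D" by (simp add: ez_def)
  then show "\<exists>(A :: 'a monoid) (C :: 'c monoid) F G.
          spp_obj A C \<and> eed_mor (H_obj A C) D F \<and> eed_mor D (H_obj A C) G \<and>
          eed_mor_eq (H_obj A C) (eed_comp F G) eed_id \<and> eed_mor_eq D (eed_comp G F) eed_id"
    by (rule ez.ess_surj)
qed

end
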